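(* Let $\Omega\subset\mathbb{R}^{n+1}$ be a compact convex body with $C^1$ boundary, and let $(\Omega_k)_{k\ge1}$ be a sequence of smooth uniformly convex bodies converging to $\Omega$ in Hausdorff distance. Then for any $\Theta\in(0,1)$ there exists $r(\Theta)>0$ depending only on $\Omega$ and $\Theta$ such that $$\max\big(\omega_\Omega(r(\Theta)),\omega_{\Omega_k}(r(\Theta))\big)<\sqrt{2-2\Theta}\qquad\text{for all }k\in\mathbb{N}.$$
   Context: For a convex body $D$ with $C^1$ boundary and outward unit normal map $\mathcal{N}_D$, $\omega_D(r):=\sup\{|\mathcal{N}_D(X_1)-\mathcal{N}_D(X_2)|:X_1,X_2\in\partial D,\ |X_1-X_2|<r\}$. A convex set $D$ is uniformly convex if there is $R>0$ with $D\subset B^{n+1}_R(X-R\nu)$ for every $X\in\partial D$ and every outward unit normal $\nu$ at $X$. Hausdorff distance: $d_H(A,B)=\max(\sup_{a\in A}\mathrm{dist}(a,B),\sup_{b\in B}\mathrm{dist}(b,A))$. *)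

theory Defs
  imports "HOL-Analysis.Analysis"
begin

definition convex_body :: "'a::euclidean_space set \<Rightarrow> bool" where
  "convex_body D \<longleftrightarrow> compact D \<and> convex D \<and> interior D \<noteq> {}"

fun Ck_on :: "nat \<Rightarrow> 'a::euclidean_space set \<Rightarrow> ('a \<Rightarrow> real) \<Rightarrow> bool" where
  "Ck_on 0 U f \<longleftrightarrow> continuous_on U f"
| "Ck_on (Suc k) U f \<longleftrightarrow> f differentiable_on U \<and>
      (\<forall>v. Ck_on k U (\<lambda>x. frechet_derivative f (at x) v))"

definition Cinf_on :: "'a::euclidean_space set \<Rightarrow> ('a \<Rightarrow> real) \<Rightarrow> bool" where
  "Cinf_on U f \<longleftrightarrow> (\<forall>k. Ck_on k U f)"

definition boundary_defining :: "('a::euclidean_space set \<Rightarrow> ('a \<Rightarrow> real) \<Rightarrow> bool)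
     \<Rightarrow> 'a set \<Rightarrow> bool" where
  "boundary_defining Reg D \<longleftrightarrow> (\<exists>U f. open U \<and> frontier D \<subseteq> U \<and> Reg U f \<and>
      (\<forall>x\<in>U. x \<in> D \<longleftrightarrow> f x \<le> 0) \<and>
      (\<forall>x\<in>frontier D. frechet_derivative f (at x) \<noteq> (\<lambda>v. 0)))"

definition C1_boundary :: "'a::euclidean_space set \<Rightarrow> bool" where
  "C1_boundary D \<longleftrightarrow> boundary_defining (Ck_on 1) D"

definition smooth_boundary :: "'a::euclidean_space set \<Rightarrow> bool" where
  "smooth_boundary D \<longleftrightarrow> boundary_defining Cinf_on D"

definition outward_unit_normal :: "'a::euclidean_space set \<Rightarrow> 'a \<Rightarrow> 'a \<Rightarrow> bool" where
  "outward_unit_normal D X \<nu> \<longleftrightarrow> X \<in> frontier D \<and> norm \<nu> = 1 \<and>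
      (\<forall>Y\<in>D. \<nu> \<bullet> (Y - X) \<le> 0)"

text \<open>Outward unit normal map (well defined when the boundary is C^1).\<close>
definition normal_map :: "'a::euclidean_space set \<Rightarrow> 'a \<Rightarrow> 'a" where
  "normal_map D X = (THE \<nu>. outward_unit_normal D X \<nu>)"

definition omega :: "'a::euclidean_space set \<Rightarrow> real \<Rightarrow> real" where
  "omega D r = Sup {norm (normal_map D X1 - normal_map D X2) | X1 X2.
      X1 \<in> frontier D \<and> X2 \<in> frontier D \<and> norm (X1 - X2) < r}"

definition uniformly_convex :: "'a::euclidean_space set \<Rightarrow> bool" where
  "uniformly_convex D \<longleftrightarrow> convex D \<and> (\<exists>R>0. \<forall>X \<nu>. outward_unit_normal D X \<nu> \<longrightarrow>
      D \<subseteq> cball (X - R *\<^sub>R \<nu>) R)"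

definition hausdorff_dist :: "'a::metric_space set \<Rightarrow> 'a set \<Rightarrow> real" where
  "hausdorff_dist A B = max (SUP a\<in>A. infdist a B) (SUP b\<in>B. infdist b A)"

end

theory Submission
  imports Defs
begin


lemma dir_deriv:
  fixes f :: "'a::euclidean_space \<Rightarrow> real"
  assumes "(f has_derivative f') (at X)"
  shows "((\<lambda>t. f (X + t *\<^sub>R v)) has_real_derivative f' v) (at 0)"
proof -
  have l: "linear f'" using assms has_derivative_linear by blast
  have d1: "((\<lambda>t. X + t *\<^sub>R v) has_derivative (\<lambda>t. t *\<^sub>R v)) (at 0)"
    by (auto intro!: derivative_eq_intros)
  have "((\<lambda>t. f (X + t *\<^sub>R v)) has_derivative (\<lambda>t. f' (t *\<^sub>R v))) (at 0)"
    using has_derivative_compose[OF d1, of f f'] assms by (simp add: o_def)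
  moreover have "(\<lambda>t. f' (t *\<^sub>R v)) = (\<lambda>t. t * f' v)"
    using l by (simp add: linear_scale)
  moreover have "(*) (f' v) = (\<lambda>t. t * f' v)" by (auto simp: mult.commute)
  ultimately show ?thesis
    by (simp add: has_field_derivative_def)
qed

lemma grad_repr:
  fixes f' :: "'a::euclidean_space \<Rightarrow> real"
  assumes "linear f'"
  shows "f' v = (\<Sum>b\<in>Basis. f' b *\<^sub>R b) \<bullet> v"
proof -
  have "f' v = (\<Sum>i\<in>Basis. v \<bullet> i * f' i)"
    using Linear_Algebra.linear_componentwise[OF assms, of v 1] by simp
  then show ?thesis by (simp add: inner_sum_right inner_commute mult.commute)
qed

lemma normal_unique:
  fixes D :: "'a::euclidean_space set" and f :: "'a \<Rightarrow> real"
  assumes cvx: "convex D" and cl: "closed D" and U: "open U" "frontier D \<subseteq> U"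
    and fd: "f differentiable_on U" and fD: "\<forall>x\<in>U. x \<in> D \<longleftrightarrow> f x \<le> 0"
    and nz: "frechet_derivative f (at X) \<noteq> (\<lambda>v. 0)" and XF: "X \<in> frontier D"
  shows "\<exists>!\<nu>. outward_unit_normal D X \<nu>"
proof -
  define f' where "f' = frechet_derivative f (at X)"
  have XU: "X \<in> U" using XF U by auto
  have "f differentiable (at X)"
    using fd XU U by (simp add: differentiable_on_eq_differentiable_at)
  then have hd: "(f has_derivative f') (at X)" unfolding f'_def
    using frechet_derivative_works by blast
  have lin: "linear f'" using hd has_derivative_linear by blast
  obtain d2 where d2: "d2 > 0" "ball X d2 \<subseteq> U" using U XU open_contains_ball by blast
  have XD: "X \<in> D" using XF cl frontier_subset_closed by blast
  have fX: "f X = 0"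
  proof (rule ccontr)
    assume "f X \<noteq> 0"
    moreover have "f X \<le> 0" using fD XD XU by blast
    ultimately have neg: "f X < 0" by linarith
    have "continuous (at X) f" using hd has_derivative_continuous by blast
    then obtain d where d: "d > 0" "\<forall>x'. dist x' X < d \<longrightarrow> dist (f x') (f X) < - f X"
      using neg unfolding continuous_at_eps_delta by (meson neg_0_less_iff_less)
    have "ball X (min d d2) \<subseteq> D"
    proof
      fix x assume x: "x \<in> ball X (min d d2)"
      then have "x \<in> U" using d2 by (auto simp: dist_commute)
      moreover have "f x < 0" using d(2) x by (auto simp: dist_commute dist_real_def)
      ultimately show "x \<in> D" using fD by auto
    qed
    then have "X \<in> interior D" using d d2 by (meson centre_in_ball interior_maximal
          open_ball min_less_iff_conj subsetD)
    then show False using XF by (simp add: frontier_def)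
  qed
  define g where "g = (\<Sum>b\<in>Basis. f' b *\<^sub>R b)"
  have fg: "\<And>v. f' v = g \<bullet> v" unfolding g_def using grad_repr[OF lin] by blast
  have gnz: "g \<noteq> 0"
  proof
    assume "g = 0"
    then have "f' = (\<lambda>v. 0)" using fg by auto
    then show False using nz f'_def by simp
  qed
  have ball_step: "\<exists>e>0. \<forall>t. 0 < t \<and> t < e \<longrightarrow> X + t *\<^sub>R v \<in> U" for v
  proof -
    define e where "e = d2 / (norm v + 1)"
    have e0: "e > 0" unfolding e_def by (intro divide_pos_pos d2(1)) (simp add: add_nonneg_pos)
    have "X + t *\<^sub>R v \<in> U" if "0 < t" "t < e" for t
    proof -
      have "norm (t *\<^sub>R v) = t * norm v" using that by simp
      also have "\<dots> \<le> e * norm v" using that by (simp add: mult_right_mono)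
      also have "\<dots> < e * (norm v + 1)" using e0 by simp
      also have "\<dots> = d2" unfolding e_def
        by (metis add_nonneg_pos norm_ge_zero nonzero_eq_divide_eq zero_less_one order_less_irrefl)
      finally show ?thesis using d2 by (auto simp: dist_norm)
    qed
    then show ?thesis using e0 by blast
  qed
  have dec: "\<exists>d>0. \<forall>t. 0 < t \<and> t < d \<longrightarrow> X + t *\<^sub>R v \<in> D" if gv: "g \<bullet> v < 0" for v
  proof -
    have "((\<lambda>t. f (X + t *\<^sub>R v)) has_real_derivative f' v) (at 0)" using dir_deriv[OF hd] .
    then obtain d where d: "d > 0" "\<forall>h>0. h < d \<longrightarrow> f (X + h *\<^sub>R v) < f X"
      using DERIV_neg_dec_right[of "\<lambda>t. f (X + t *\<^sub>R v)" "f' v" 0] gv fg by auto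
    obtain e where e: "e > 0" "\<forall>t. 0 < t \<and> t < e \<longrightarrow> X + t *\<^sub>R v \<in> U" using ball_step by blast
    show ?thesis
      apply (rule exI[of _ "min d e"]) using d e fD fX by auto
  qed
  have inc: "\<exists>d>0. \<forall>t. 0 < t \<and> t < d \<longrightarrow> X + t *\<^sub>R v \<notin> D" if gv: "g \<bullet> v > 0" for v
  proof -
    have "((\<lambda>t. f (X + t *\<^sub>R v)) has_real_derivative f' v) (at 0)" using dir_deriv[OF hd] .
    then obtain d where d: "d > 0" "\<forall>h>0. h < d \<longrightarrow> f X < f (X + h *\<^sub>R v)"
      using DERIV_pos_inc_right[of "\<lambda>t. f (X + t *\<^sub>R v)" "f' v" 0] gv fg by auto
    obtain e where e: "e > 0" "\<forall>t. 0 < t \<and> t < e \<longrightarrow> X + t *\<^sub>R v \<in> U" using ball_step by blast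
    show ?thesis
      apply (rule exI[of _ "min d e"]) using d e fD fX by force
  qed
  define u where "u = g /\<^sub>R norm g"
  have un: "outward_unit_normal D X u"
    unfolding outward_unit_normal_def
  proof (intro conjI ballI)
    show "X \<in> frontier D" by fact
    show "norm u = 1" using gnz by (simp add: u_def)
    fix Y assume Y: "Y \<in> D"
    show "u \<bullet> (Y - X) \<le> 0"
    proof (rule ccontr)
      assume "\<not> u \<bullet> (Y - X) \<le> 0"
      then have "g \<bullet> (Y - X) > 0" using gnz by (simp add: u_def divide_simps split: if_splits)
      then obtain d where d: "d > 0" "\<forall>t. 0 < t \<and> t < d \<longrightarrow> X + t *\<^sub>R (Y - X) \<notin> D"
        using inc by blast
      define t where "t = min (d/2) (1/2)"
      have t: "0 < t" "t < d" "t \<le> 1" using d by (auto simp: t_def)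
      have "X + t *\<^sub>R (Y - X) = (1 - t) *\<^sub>R X + t *\<^sub>R Y" by (simp add: algebra_simps)
      also have "\<dots> \<in> D" using cvx XD Y t by (simp add: convex_def)
      finally show False using d t by blast
    qed
  qed
  have uniq: "\<nu> = u" if nu: "outward_unit_normal D X \<nu>" for \<nu>
  proof -
    have n1: "norm \<nu> = 1" and sup: "\<forall>Y\<in>D. \<nu> \<bullet> (Y - X) \<le> 0"
      using nu by (auto simp: outward_unit_normal_def)
    have P: "\<nu> \<bullet> v \<le> 0" if gv: "g \<bullet> v < 0" for v
    proof -
      obtain d where d: "d > 0" "\<forall>t. 0 < t \<and> t < d \<longrightarrow> X + t *\<^sub>R v \<in> D" using dec[OF gv] by blast
      have "X + (d/2) *\<^sub>R v \<in> D" using d by simp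
      then have "\<nu> \<bullet> ((d/2) *\<^sub>R v) \<le> 0" using sup by force
      then show ?thesis using d by (simp add: mult_le_0_iff)
    qed
    have P0: "\<nu> \<bullet> v \<le> 0" if gv: "g \<bullet> v \<le> 0" for v
    proof (rule ccontr)
      assume c: "\<not> \<nu> \<bullet> v \<le> 0"
      define \<delta> where "\<delta> = (if \<nu> \<bullet> g \<le> 0 then 1 else (\<nu> \<bullet> v) / (2 * (\<nu> \<bullet> g)))"
      have \<delta>0: "\<delta> > 0" using c by (auto simp: \<delta>_def)
      have "g \<bullet> (v - \<delta> *\<^sub>R g) < 0" using gv \<delta>0 gnz
        by (simp add: inner_diff_right) (smt (verit) inner_gt_zero_iff mult_pos_pos)
      then have "\<nu> \<bullet> (v - \<delta> *\<^sub>R g) \<le> 0" using P by blast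
      then have "\<nu> \<bullet> v \<le> \<delta> * (\<nu> \<bullet> g)" by (simp add: inner_diff_right)
      moreover have "\<delta> * (\<nu> \<bullet> g) < \<nu> \<bullet> v"
        using c by (auto simp: \<delta>_def)
      ultimately show False by linarith
    qed
    have P1: "\<nu> \<bullet> g \<ge> 0" using P[of "- g"] gnz by simp
    have "\<nu> \<bullet> ((g \<bullet> g) *\<^sub>R \<nu> - (g \<bullet> \<nu>) *\<^sub>R g) \<le> 0"
      by (rule P0) (simp add: inner_diff_right inner_commute)
    then have "(g \<bullet> g) * (\<nu> \<bullet> \<nu>) \<le> (g \<bullet> \<nu>) * (\<nu> \<bullet> g)"
      by (simp add: inner_diff_right)
    then have "(norm g)^2 \<le> (\<nu> \<bullet> g)^2"
      using n1 by (simp add: norm_eq_1 power2_norm_eq_inner[symmetric] power2_eq_square inner_commute)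
    moreover have "\<nu> \<bullet> g \<le> norm g" using n1
      by (metis Cauchy_Schwarz_ineq2 abs_le_D1 mult_1)
    ultimately have P3: "\<nu> \<bullet> g = norm g" using P1
      by (meson order_antisym power2_le_imp_le)
    have "(norm (\<nu> - u))^2 = \<nu> \<bullet> \<nu> - 2 * (\<nu> \<bullet> u) + u \<bullet> u"
      by (simp add: power2_norm_eq_inner inner_diff_left inner_diff_right inner_commute)
    also have "\<dots> = 0" using n1 gnz P3
      by (simp add: u_def power2_norm_eq_inner[symmetric])
    finally show ?thesis by simp
  qed
  show ?thesis using un uniq by blast
qed



lemma normal_limit:
  fixes x v :: "nat \<Rightarrow> 'a::euclidean_space"
  assumes nm: "\<forall>m. outward_unit_normal (S m) (x m) (v m)" and xl: "x \<longlonglongrightarrow> X"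
    and vl: "v \<longlonglongrightarrow> V" and XD: "X \<in> D"
    and app: "\<forall>Y\<in>D. \<exists>y. y \<longlonglongrightarrow> Y \<and> (\<forall>m. y m \<in> S m)"
  shows "outward_unit_normal D X V"
proof -
  have "(\<lambda>m. norm (v m)) \<longlonglongrightarrow> norm V" using vl by (rule tendsto_norm)
  moreover have "(\<lambda>m. norm (v m)) = (\<lambda>m. 1)" using nm by (auto simp: outward_unit_normal_def)
  ultimately have "(\<lambda>m. 1::real) \<longlonglongrightarrow> norm V" by simp
  then have nV: "norm V = 1" using LIMSEQ_unique[OF tendsto_const] by metis
  have sup: "V \<bullet> (Y - X) \<le> 0" if Y: "Y \<in> D" for Y
  proof -
    obtain y where y: "y \<longlonglongrightarrow> Y" "\<forall>m. y m \<in> S m" using app Y by blast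
    have "(\<lambda>m. v m \<bullet> (y m - x m)) \<longlonglongrightarrow> V \<bullet> (Y - X)"
      by (intro tendsto_intros vl y xl)
    moreover have "\<forall>m. v m \<bullet> (y m - x m) \<le> 0" using nm y(2) by (auto simp: outward_unit_normal_def)
    ultimately show ?thesis using LIMSEQ_le_const2 by blast
  qed
  have "X \<notin> interior D"
  proof
    assume "X \<in> interior D"
    then obtain e where e: "e > 0" "ball X e \<subseteq> D" using mem_interior by blast
    have "X + (e/2) *\<^sub>R V \<in> ball X e" using e nV by (simp add: dist_norm)
    then have "V \<bullet> ((X + (e/2) *\<^sub>R V) - X) \<le> 0" using sup e by blast
    then show False using nV e by (simp add: norm_eq_1)
  qed
  then have "X \<in> frontier D" using XD closure_subset by (auto simp: frontier_def)
  then show ?thesis using nV sup by (simp add: outward_unit_normal_def)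
qed

lemma key:
  fixes xa xb va vb :: "nat \<Rightarrow> 'a::euclidean_space"
  assumes n1: "\<forall>m. outward_unit_normal (S m) (xa m) (va m)"
    and n2: "\<forall>m. outward_unit_normal (S m) (xb m) (vb m)"
    and cl: "\<forall>m. norm (xa m - xb m) < 1 / Suc m" and far: "\<forall>m. norm (va m - vb m) \<ge> \<epsilon>"
    and \<epsilon>: "\<epsilon> > 0"
    and bd: "bounded (range xa)"
    and lim: "\<forall>\<phi> X. strict_mono \<phi> \<longrightarrow> (xa \<circ> \<phi>) \<longlonglongrightarrow> X \<longrightarrow> X \<in> D"
    and app: "\<forall>\<phi>. strict_mono \<phi> \<longrightarrow> (\<forall>Y\<in>D. \<exists>y. y \<longlonglongrightarrow> Y \<and> (\<forall>m. y m \<in> S (\<phi> m)))"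
    and un: "\<forall>X\<in>frontier D. \<exists>!\<nu>. outward_unit_normal D X \<nu>"
  shows False
proof -
  define z where "z m = (xa m, va m, vb m)" for m
  have "range z \<subseteq> range xa \<times> cball 0 1 \<times> cball 0 1"
    using n1 n2 by (auto simp: z_def outward_unit_normal_def)
  moreover have "bounded (range xa \<times> cball (0::'a) 1 \<times> cball (0::'a) 1)"
    by (intro bounded_Times bd bounded_cball)
  ultimately have "bounded (range z)" using bounded_subset by blast
  then obtain l \<phi> where \<phi>: "strict_mono \<phi>" "(z \<circ> \<phi>) \<longlonglongrightarrow> l"
    using bounded_imp_convergent_subsequence by blast
  obtain X V1 V2 where l: "l = (X, V1, V2)" by (cases l) auto
  have x1l: "(xa \<circ> \<phi>) \<longlonglongrightarrow> X"
    using tendsto_fst[OF \<phi>(2)] by (simp add: l z_def o_def)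
  have v1l: "(va \<circ> \<phi>) \<longlonglongrightarrow> V1"
    using tendsto_fst[OF tendsto_snd[OF \<phi>(2)]] by (simp add: l z_def o_def)
  have v2l: "(vb \<circ> \<phi>) \<longlonglongrightarrow> V2"
    using tendsto_snd[OF tendsto_snd[OF \<phi>(2)]] by (simp add: l z_def o_def)
  have "(\<lambda>n. 1 / real n) \<longlonglongrightarrow> 0" by (rule lim_1_over_n)
  then have "(\<lambda>n. 1 / real (Suc n)) \<longlonglongrightarrow> 0" by (rule LIMSEQ_Suc)
  then have "((\<lambda>n. 1 / real (Suc n)) \<circ> \<phi>) \<longlonglongrightarrow> 0" using \<phi>(1) by (rule LIMSEQ_subseq_LIMSEQ)
  moreover have "\<forall>\<^sub>F m in sequentially. norm (xa (\<phi> m) - xb (\<phi> m)) \<le> ((\<lambda>n. 1 / real (Suc n)) \<circ> \<phi>) m"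
  proof (rule always_eventually, rule allI)
    fix m show "norm (xa (\<phi> m) - xb (\<phi> m)) \<le> ((\<lambda>n. 1 / real (Suc n)) \<circ> \<phi>) m"
      using cl[rule_format, of "\<phi> m"] by simp
  qed
  ultimately have "(\<lambda>m. xa (\<phi> m) - xb (\<phi> m)) \<longlonglongrightarrow> 0"
    using Lim_null_comparison[of "\<lambda>m. xa (\<phi> m) - xb (\<phi> m)" "(\<lambda>n. 1 / real (Suc n)) \<circ> \<phi>" sequentially] by blast
  then have "(\<lambda>m. xa (\<phi> m) - (xa (\<phi> m) - xb (\<phi> m))) \<longlonglongrightarrow> X - 0"
    using x1l by (intro tendsto_diff) (auto simp: o_def)
  then have x2l: "(xb \<circ> \<phi>) \<longlonglongrightarrow> X" by (simp add: o_def)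
  have XD: "X \<in> D" using lim \<phi>(1) x1l by blast
  have app': "\<forall>Y\<in>D. \<exists>y. y \<longlonglongrightarrow> Y \<and> (\<forall>m. y m \<in> (S \<circ> \<phi>) m)" using app \<phi>(1) by auto
  have N1: "outward_unit_normal D X V1"
    by (rule normal_limit[OF _ x1l v1l XD app']) (use n1 in auto)
  have N2: "outward_unit_normal D X V2"
    by (rule normal_limit[OF _ x2l v2l XD app']) (use n2 in auto)
  have "X \<in> frontier D" using N1 by (simp add: outward_unit_normal_def)
  then have eq: "V1 = V2" using un N1 N2 by blast
  have "(\<lambda>m. norm (va (\<phi> m) - vb (\<phi> m))) \<longlonglongrightarrow> norm (V1 - V2)"
    using v1l v2l by (intro tendsto_intros) (auto simp: o_def)
  then have "norm (V1 - V2) \<ge> \<epsilon>" using far by (intro LIMSEQ_le_const) auto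
  then show False using eq \<epsilon> by simp
qed

lemma normal_map_works:
  "\<exists>!\<nu>. outward_unit_normal D X \<nu> \<Longrightarrow> outward_unit_normal D X (normal_map D X)"
  unfolding normal_map_def by (rule theI')



lemma unifA:
  fixes D :: "'a::euclidean_space set"
  assumes cD: "compact D" and un: "\<forall>X\<in>frontier D. \<exists>!\<nu>. outward_unit_normal D X \<nu>" and \<epsilon>: "\<epsilon> > 0"
  shows "\<exists>r>0. \<forall>X1\<in>frontier D. \<forall>X2\<in>frontier D. norm (X1 - X2) < r \<longrightarrow>
            norm (normal_map D X1 - normal_map D X2) < \<epsilon>"
proof (rule ccontr)
  assume "\<not> ?thesis"
  then have "\<forall>m. \<exists>X1 X2. X1 \<in> frontier D \<and> X2 \<in> frontier D \<and> norm (X1 - X2) < 1 / Suc m \<and>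
            norm (normal_map D X1 - normal_map D X2) \<ge> \<epsilon>"
    by (metis not_le of_nat_0_less_iff zero_less_Suc zero_less_divide_1_iff)
  then obtain x1 x2 where x: "\<forall>m. x1 m \<in> frontier D \<and> x2 m \<in> frontier D \<and> norm (x1 m - x2 m) < 1 / Suc m \<and>
            norm (normal_map D (x1 m) - normal_map D (x2 m)) \<ge> \<epsilon>"
    by metis
  have clD: "closed D" using cD compact_imp_closed by blast
  have fD: "frontier D \<subseteq> D" using clD frontier_subset_closed by blast
  show False
  proof (rule key[where S = "\<lambda>_. D" and xa = x1 and xb = x2 and D = D and \<epsilon> = \<epsilon>
        and va = "\<lambda>m. normal_map D (x1 m)" and vb = "\<lambda>m. normal_map D (x2 m)"])
    show "\<forall>m. outward_unit_normal D (x1 m) (normal_map D (x1 m))"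
      using x un normal_map_works by blast
    show "\<forall>m. outward_unit_normal D (x2 m) (normal_map D (x2 m))"
      using x un normal_map_works by blast
    show "\<forall>m. norm (x1 m - x2 m) < 1 / real (Suc m)" using x by blast
    show "\<forall>m. \<epsilon> \<le> norm (normal_map D (x1 m) - normal_map D (x2 m))" using x by blast
    show "0 < \<epsilon>" by fact
    show "bounded (range x1)"
      using x fD compact_imp_bounded[OF cD] bounded_subset by (metis image_subset_iff subsetD)
    show "\<forall>\<phi> X. strict_mono \<phi> \<longrightarrow> (x1 \<circ> \<phi>) \<longlonglongrightarrow> X \<longrightarrow> X \<in> D"
    proof (intro allI impI)
      fix \<phi> :: "nat \<Rightarrow> nat" and X assume "(x1 \<circ> \<phi>) \<longlonglongrightarrow> X"
      moreover have "\<And>n. (x1 \<circ> \<phi>) n \<in> D" using x fD by auto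
      ultimately show "X \<in> D" using closed_sequentially[OF clD] by blast
    qed
    show "\<forall>\<phi>. strict_mono \<phi> \<longrightarrow> (\<forall>Y\<in>D. \<exists>y. y \<longlonglongrightarrow> Y \<and> (\<forall>m. y m \<in> D))"
      by (auto intro!: exI[of _ "\<lambda>_. _"])
    show "\<forall>X\<in>frontier D. \<exists>!\<nu>. outward_unit_normal D X \<nu>" by fact
  qed
qed

lemma hd_bound1:
  fixes A B :: "'a::euclidean_space set"
  assumes "compact A" "compact B" "a \<in> A"
  shows "infdist a B \<le> hausdorff_dist A B"
proof -
  have "compact ((\<lambda>a. infdist a B) ` A)"
    by (intro compact_continuous_image continuous_on_infdist continuous_on_id assms)
  then have "bdd_above ((\<lambda>a. infdist a B) ` A)" by (simp add: bounded_imp_bdd_above compact_imp_bounded)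
  then have "infdist a B \<le> (SUP a\<in>A. infdist a B)" using assms(3) by (rule cSUP_upper[rotated])
  then show ?thesis unfolding hausdorff_dist_def by linarith
qed

lemma hd_bound2:
  fixes A B :: "'a::euclidean_space set"
  assumes "compact A" "compact B" "b \<in> B"
  shows "infdist b A \<le> hausdorff_dist A B"
proof -
  have "compact ((\<lambda>b. infdist b A) ` B)"
    by (intro compact_continuous_image continuous_on_infdist continuous_on_id assms)
  then have "bdd_above ((\<lambda>b. infdist b A) ` B)" by (simp add: bounded_imp_bdd_above compact_imp_bounded)
  then have "infdist b A \<le> (SUP b\<in>B. infdist b A)" using assms(3) by (rule cSUP_upper[rotated])
  then show ?thesis unfolding hausdorff_dist_def by linarith
qed



lemma unifB:
  fixes \<Omega> :: "'a::euclidean_space set" and \<Omega>k :: "nat \<Rightarrow> 'a set"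
  assumes cO: "compact \<Omega>" "\<Omega> \<noteq> {}" and cK: "\<forall>k. compact (\<Omega>k k) \<and> \<Omega>k k \<noteq> {}"
    and unO: "\<forall>X\<in>frontier \<Omega>. \<exists>!\<nu>. outward_unit_normal \<Omega> X \<nu>"
    and unK: "\<forall>k. \<forall>X\<in>frontier (\<Omega>k k). \<exists>!\<nu>. outward_unit_normal (\<Omega>k k) X \<nu>"
    and hl: "(\<lambda>k. hausdorff_dist (\<Omega>k k) \<Omega>) \<longlonglongrightarrow> 0" and \<epsilon>: "\<epsilon> > 0"
  shows "\<exists>N. \<exists>r>0. \<forall>k\<ge>N. \<forall>X1\<in>frontier (\<Omega>k k). \<forall>X2\<in>frontier (\<Omega>k k). norm (X1 - X2) < r \<longrightarrow>
            norm (normal_map (\<Omega>k k) X1 - normal_map (\<Omega>k k) X2) < \<epsilon>"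
proof (rule ccontr)
  define h where "h k = hausdorff_dist (\<Omega>k k) \<Omega>" for k
  have hl': "h \<longlonglongrightarrow> 0" using hl by (simp add: h_def[abs_def])
  have "\<forall>\<^sub>F k in sequentially. h k < 1" using order_tendstoD(2)[OF hl', of 1] by simp
  then obtain N0 where N0: "\<forall>k\<ge>N0. h k < 1" by (auto simp: eventually_sequentially)
  have clO: "closed \<Omega>" using cO compact_imp_closed by blast
  have clK: "closed (\<Omega>k k)" for k using cK compact_imp_closed by blast
  have fK: "frontier (\<Omega>k k) \<subseteq> \<Omega>k k" for k using clK frontier_subset_closed by blast
  assume "\<not> ?thesis"
  then have "\<forall>N r. r > 0 \<longrightarrow> (\<exists>k\<ge>N. \<exists>X1\<in>frontier (\<Omega>k k). \<exists>X2\<in>frontier (\<Omega>k k). norm (X1 - X2) < r \<and>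
            norm (normal_map (\<Omega>k k) X1 - normal_map (\<Omega>k k) X2) \<ge> \<epsilon>)"
    by (meson not_le)
  then have "\<forall>m. \<exists>k X1 X2. k \<ge> max m N0 \<and> X1 \<in> frontier (\<Omega>k k) \<and> X2 \<in> frontier (\<Omega>k k) \<and>
        norm (X1 - X2) < 1 / Suc m \<and> norm (normal_map (\<Omega>k k) X1 - normal_map (\<Omega>k k) X2) \<ge> \<epsilon>"
    by (metis of_nat_0_less_iff zero_less_Suc zero_less_divide_1_iff)
  then obtain kk x1 x2 where x: "\<forall>m. kk m \<ge> max m N0 \<and> x1 m \<in> frontier (\<Omega>k (kk m)) \<and>
        x2 m \<in> frontier (\<Omega>k (kk m)) \<and>
        norm (x1 m - x2 m) < 1 / Suc m \<and>
        norm (normal_map (\<Omega>k (kk m)) (x1 m) - normal_map (\<Omega>k (kk m)) (x2 m)) \<ge> \<epsilon>"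
    by metis
  have hkk: "(\<lambda>m. h (kk (\<phi> m))) \<longlonglongrightarrow> 0" if \<phi>: "strict_mono \<phi>" for \<phi>
  proof -
    have "\<forall>\<^sub>F m in sequentially. m \<le> kk (\<phi> m)"
      using x seq_suble[OF \<phi>] by (metis always_eventually le_trans max.boundedE)
    then have "filterlim (\<lambda>m. kk (\<phi> m)) at_top sequentially"
      by (rule filterlim_at_top_mono[OF filterlim_ident])
    then show ?thesis using filterlim_compose[OF hl'] by blast
  qed
  show False
  proof (rule key[where S = "\<lambda>m. \<Omega>k (kk m)" and xa = x1 and xb = x2 and D = \<Omega> and \<epsilon> = \<epsilon>
        and va = "\<lambda>m. normal_map (\<Omega>k (kk m)) (x1 m)" and vb = "\<lambda>m. normal_map (\<Omega>k (kk m)) (x2 m)"])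
    show "\<forall>m. outward_unit_normal (\<Omega>k (kk m)) (x1 m) (normal_map (\<Omega>k (kk m)) (x1 m))"
      using x unK normal_map_works by blast
    show "\<forall>m. outward_unit_normal (\<Omega>k (kk m)) (x2 m) (normal_map (\<Omega>k (kk m)) (x2 m))"
      using x unK normal_map_works by blast
    show "\<forall>m. norm (x1 m - x2 m) < 1 / real (Suc m)" using x by blast
    show "\<forall>m. \<epsilon> \<le> norm (normal_map (\<Omega>k (kk m)) (x1 m) - normal_map (\<Omega>k (kk m)) (x2 m))"
      using x by blast
    show "0 < \<epsilon>" by fact
    obtain R where R: "\<forall>y\<in>\<Omega>. norm y \<le> R" using compact_imp_bounded[OF cO(1)] bounded_iff by blast
    have "norm (x1 m) \<le> R + 1" for m
    proof -
      have xm: "x1 m \<in> \<Omega>k (kk m)" using x fK by blast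
      have "infdist (x1 m) \<Omega> \<le> h (kk m)" unfolding h_def
        using hd_bound1[OF _ cO(1) xm] cK by blast
      also have "\<dots> < 1" using N0 x by auto
      finally have lt: "infdist (x1 m) \<Omega> < 1" .
      obtain y where y: "y \<in> \<Omega>" "infdist (x1 m) \<Omega> = dist (x1 m) y"
        using infdist_attains_inf[OF clO cO(2)] by blast
      have "norm (x1 m) \<le> norm y + dist (x1 m) y"
        by (metis dist_norm norm_triangle_sub add.commute)
      then show ?thesis using R y lt by fastforce
    qed
    then show "bounded (range x1)" unfolding bounded_iff by blast
    show "\<forall>\<phi> X. strict_mono \<phi> \<longrightarrow> (x1 \<circ> \<phi>) \<longlonglongrightarrow> X \<longrightarrow> X \<in> \<Omega>"
    proof (intro allI impI)
      fix \<phi> :: "nat \<Rightarrow> nat" and X assume \<phi>: "strict_mono \<phi>" and xl: "(x1 \<circ> \<phi>) \<longlonglongrightarrow> X"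
      have "(\<lambda>m. infdist ((x1 \<circ> \<phi>) m) \<Omega>) \<longlonglongrightarrow> infdist X \<Omega>" using xl by (rule tendsto_infdist)
      moreover have "\<forall>m. infdist ((x1 \<circ> \<phi>) m) \<Omega> \<le> h (kk (\<phi> m))"
      proof
        fix m
        have xm: "x1 (\<phi> m) \<in> \<Omega>k (kk (\<phi> m))" using x fK by blast
        show "infdist ((x1 \<circ> \<phi>) m) \<Omega> \<le> h (kk (\<phi> m))" unfolding h_def o_def
          using hd_bound1[OF _ cO(1) xm] cK by blast
      qed
      ultimately have "infdist X \<Omega> \<le> 0" using hkk[OF \<phi>] by (intro LIMSEQ_le) auto
      then have "infdist X \<Omega> = 0" using infdist_nonneg[of X \<Omega>] by linarith
      then show "X \<in> \<Omega>" using in_closed_iff_infdist_zero[OF clO cO(2)] by blast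
    qed
    show "\<forall>\<phi>. strict_mono \<phi> \<longrightarrow> (\<forall>Y\<in>\<Omega>. \<exists>y. y \<longlonglongrightarrow> Y \<and> (\<forall>m. y m \<in> \<Omega>k (kk (\<phi> m))))"
    proof (intro allI impI ballI)
      fix \<phi> :: "nat \<Rightarrow> nat" and Y assume \<phi>: "strict_mono \<phi>" and Y: "Y \<in> \<Omega>"
      have "\<forall>m::nat. \<exists>y. y \<in> \<Omega>k (kk (\<phi> m)) \<and> infdist Y (\<Omega>k (kk (\<phi> m))) = dist Y y"
        using infdist_attains_inf[OF clK] cK by metis
      then obtain y where y: "\<forall>m. y m \<in> \<Omega>k (kk (\<phi> m)) \<and> infdist Y (\<Omega>k (kk (\<phi> m))) = dist Y (y m)"
        by metis
      have "\<forall>m. dist (y m) Y \<le> h (kk (\<phi> m))"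
      proof
        fix m
        have "infdist Y (\<Omega>k (kk (\<phi> m))) \<le> h (kk (\<phi> m))" unfolding h_def
          using hd_bound2[OF _ cO(1) Y] cK by blast
        then show "dist (y m) Y \<le> h (kk (\<phi> m))" using y by (simp add: dist_commute)
      qed
      then have "\<forall>\<^sub>F m in sequentially. norm (dist (y m) Y) \<le> h (kk (\<phi> m))"
        by (simp add: always_eventually)
      then have "(\<lambda>m. dist (y m) Y) \<longlonglongrightarrow> 0"
        using Lim_null_comparison[of "\<lambda>m. dist (y m) Y" "\<lambda>m. h (kk (\<phi> m))" sequentially] hkk[OF \<phi>]
        by blast
      then have "y \<longlonglongrightarrow> Y" using tendsto_dist_iff by blast
      then show "\<exists>y. y \<longlonglongrightarrow> Y \<and> (\<forall>m. y m \<in> \<Omega>k (kk (\<phi> m)))" using y by blast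
    qed
    show "\<forall>X\<in>frontier \<Omega>. \<exists>!\<nu>. outward_unit_normal \<Omega> X \<nu>" by fact
  qed
qed



lemma uniq_from_bd:
  fixes D :: "'a::euclidean_space set"
  assumes "convex D" "compact D" "boundary_defining Reg D"
    and "\<And>U f. Reg U f \<Longrightarrow> f differentiable_on U"
  shows "\<forall>X\<in>frontier D. \<exists>!\<nu>. outward_unit_normal D X \<nu>"
proof
  fix X assume X: "X \<in> frontier D"
  obtain U f where Uf: "open U" "frontier D \<subseteq> U" "Reg U f" "\<forall>x\<in>U. x \<in> D \<longleftrightarrow> f x \<le> 0"
      "\<forall>x\<in>frontier D. frechet_derivative f (at x) \<noteq> (\<lambda>v. 0)"
    using assms(3) unfolding boundary_defining_def by blast
  show "\<exists>!\<nu>. outward_unit_normal D X \<nu>"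
    by (rule normal_unique[OF assms(1) compact_imp_closed[OF assms(2)] Uf(1,2) assms(4)[OF Uf(3)] Uf(4)])
      (use Uf(5) X in auto)
qed

lemma frontier_ne:
  fixes D :: "'a::euclidean_space set"
  assumes "convex_body D" shows "frontier D \<noteq> {}"
proof -
  have "compact D" "interior D \<noteq> {}" using assms by (auto simp: convex_body_def)
  then have "D \<noteq> {}" "D \<noteq> UNIV" using interior_subset compact_imp_bounded not_bounded_UNIV by blast+
  then show ?thesis by (rule frontier_not_empty)
qed

lemma omega_le:
  fixes D :: "'a::euclidean_space set"
  assumes "frontier D \<noteq> {}" "r > 0"
    and "\<forall>X1\<in>frontier D. \<forall>X2\<in>frontier D. norm (X1 - X2) < r \<longrightarrow>
            norm (normal_map D X1 - normal_map D X2) < \<epsilon>"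
  shows "omega D r \<le> \<epsilon>"
  unfolding omega_def
proof (rule cSup_least)
  obtain X where "X \<in> frontier D" using assms(1) by blast
  then show "{norm (normal_map D X1 - normal_map D X2) |X1 X2.
      X1 \<in> frontier D \<and> X2 \<in> frontier D \<and> norm (X1 - X2) < r} \<noteq> {}" using assms(2) by force
  show "\<And>x. x \<in> {norm (normal_map D X1 - normal_map D X2) |X1 X2.
      X1 \<in> frontier D \<and> X2 \<in> frontier D \<and> norm (X1 - X2) < r} \<Longrightarrow> x \<le> \<epsilon>"
    using assms(3) by fastforce
qed

theorem lemma5p4:
  fixes \<Omega> :: "'a::euclidean_space set" and \<Omega>k :: "nat \<Rightarrow> 'a set"
  assumes "convex_body \<Omega>" and "C1_boundary \<Omega>"
    and "\<And>k. convex_body (\<Omega>k k) \<and> smooth_boundary (\<Omega>k k) \<and> uniformly_convex (\<Omega>k k)"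
    and "(\<lambda>k. hausdorff_dist (\<Omega>k k) \<Omega>) \<longlonglongrightarrow> 0"
    and "0 < \<Theta>" and "\<Theta> < 1"
  shows "\<exists>r>0. \<forall>k. max (omega \<Omega> r) (omega (\<Omega>k k) r) < sqrt (2 - 2 * \<Theta>)"
proof -
  have cO: "compact \<Omega>" "convex \<Omega>" using assms(1) by (auto simp: convex_body_def)
  have cK: "compact (\<Omega>k k)" "convex (\<Omega>k k)" for k using assms(3)[of k] by (auto simp: convex_body_def)
  have neO: "\<Omega> \<noteq> {}" using assms(1) interior_subset by (auto simp: convex_body_def)
  have neK: "\<Omega>k k \<noteq> {}" for k using assms(3)[of k] interior_subset by (auto simp: convex_body_def)
  have unO: "\<forall>X\<in>frontier \<Omega>. \<exists>!\<nu>. outward_unit_normal \<Omega> X \<nu>"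
    using uniq_from_bd[OF cO(2,1), of "Ck_on 1"] assms(2) by (simp add: C1_boundary_def)
  have unK: "\<forall>X\<in>frontier (\<Omega>k k). \<exists>!\<nu>. outward_unit_normal (\<Omega>k k) X \<nu>" for k
  proof (rule uniq_from_bd[OF cK(2,1), of Cinf_on])
    show "boundary_defining Cinf_on (\<Omega>k k)" using assms(3)[of k] by (simp add: smooth_boundary_def)
    fix U f assume "Cinf_on U f"
    then have "Ck_on 1 U f" unfolding Cinf_on_def by blast
    then show "f differentiable_on U" by simp
  qed
  define \<epsilon> where "\<epsilon> = sqrt (2 - 2 * \<Theta>) / 2"
  have s0: "sqrt (2 - 2 * \<Theta>) > 0" using assms(6) by simp
  then have \<epsilon>0: "\<epsilon> > 0" and \<epsilon>lt: "\<epsilon> < sqrt (2 - 2 * \<Theta>)" by (auto simp: \<epsilon>_def)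
  obtain rO where rO: "rO > 0" "\<forall>X1\<in>frontier \<Omega>. \<forall>X2\<in>frontier \<Omega>. norm (X1 - X2) < rO \<longrightarrow>
            norm (normal_map \<Omega> X1 - normal_map \<Omega> X2) < \<epsilon>"
    using unifA[OF cO(1) unO \<epsilon>0] by blast
  obtain N rB where rB: "rB > 0" "\<forall>k\<ge>N. \<forall>X1\<in>frontier (\<Omega>k k). \<forall>X2\<in>frontier (\<Omega>k k). norm (X1 - X2) < rB \<longrightarrow>
            norm (normal_map (\<Omega>k k) X1 - normal_map (\<Omega>k k) X2) < \<epsilon>"
    using unifB[OF cO(1) neO _ unO _ assms(4) \<epsilon>0] cK neK unK by blast
  have "\<forall>k. \<exists>r>0. \<forall>X1\<in>frontier (\<Omega>k k). \<forall>X2\<in>frontier (\<Omega>k k). norm (X1 - X2) < r \<longrightarrow>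
            norm (normal_map (\<Omega>k k) X1 - normal_map (\<Omega>k k) X2) < \<epsilon>"
    using unifA[OF cK(1) unK \<epsilon>0] by blast
  then obtain rA where rA: "\<forall>k. rA k > 0 \<and> (\<forall>X1\<in>frontier (\<Omega>k k). \<forall>X2\<in>frontier (\<Omega>k k). norm (X1 - X2) < rA k \<longrightarrow>
            norm (normal_map (\<Omega>k k) X1 - normal_map (\<Omega>k k) X2) < \<epsilon>)"
    by metis
  define r where "r = Min (insert rO (insert rB (rA ` {..<N})))"
  have fin: "finite (insert rO (insert rB (rA ` {..<N})))" by simp
  have r0: "r > 0" unfolding r_def using fin rO rB rA by (subst Min_gr_iff) auto
  have rle: "r \<le> rO" "r \<le> rB" "\<And>k. k < N \<Longrightarrow> r \<le> rA k" unfolding r_def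
    by (rule Min_le[OF fin], simp)+
  have oO: "omega \<Omega> r \<le> \<epsilon>"
    by (rule omega_le[OF frontier_ne[OF assms(1)] r0]) (use rO rle in fastforce)
  have oK: "omega (\<Omega>k k) r \<le> \<epsilon>" for k
  proof (rule omega_le[OF frontier_ne r0])
    show "convex_body (\<Omega>k k)" using assms(3) by blast
    show "\<forall>X1\<in>frontier (\<Omega>k k). \<forall>X2\<in>frontier (\<Omega>k k). norm (X1 - X2) < r \<longrightarrow>
            norm (normal_map (\<Omega>k k) X1 - normal_map (\<Omega>k k) X2) < \<epsilon>"
    proof (cases "k < N")
      case True then show ?thesis using rA rle(3)[OF True] by fastforce
    next
      case False then show ?thesis using rB rle(2) by fastforce
    qed
  qed
  show ?thesis
  proof (intro exI[of _ r] conjI allI)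
    fix k show "max (omega \<Omega> r) (omega (\<Omega>k k) r) < sqrt (2 - 2 * \<Theta>)"
      using oO oK[of k] \<epsilon>lt by linarith
  qed (rule r0)
qed

end
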